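(* Let t₁ and t₂ be regular terms in the language of strong quasi-Wajsberg* algebras. Then the equation t₁ ≈ t₂ holds in all strong quasi-Wajsberg* algebras iff it holds in all Wajsberg* algebras.
   Context: A quasi-Wajsberg* algebra is an algebra ⟨W; →, ¬, ⁺, ⁻, 1⟩ of type ⟨2,1,1,1,0⟩ satisfying: x→y = ¬y→¬x; (x→1)→((y→1)→z) = (y→1)→((x→1)→z); (1→x)→1 = 1; (z→z)→(x→y) = x→y; (1→1)→x⁺ = ((1→1)→x)⁺ = (x→1)→1 and (1→1)→x⁻ = ((1→1)→x)⁻ = (x→¬1)→¬1; x→y = (y⁺→x⁻)→(x⁺→y⁻); ¬(x→y) = y→x; ¬¬x = x; (x→(¬x→y))⁺ = x⁺→(¬x⁺→y⁺); x∨y = y∨x; x∨(y∨z) = (x∨y)∨z; x→(y∨z) = (x→y)∨(x→z); where x∨y = ((x⁺→y⁺)⁺→(¬x)⁻)→((y⁻→x⁻)⁻→x⁻). A strong quasi-Wajsberg* algebra is a quasi-Wajsberg* algebra satisfying x⁺ = (1→1)→x⁺ and x⁻ = (1→1)→x⁻ for all x. A Wajsberg* algebra is an algebra ⟨M; →, ¬, 1⟩ satisfying the analogous axioms with (y→y)→x = x in place of (z→z)→(x→y) = x→y, where x⁺ = (x→1)→1 and x⁻ = (x→¬1)→¬1; every Wajsberg* algebra is a strong quasi-Wajsberg* algebra. A term in the language of strong quasi-Wajsberg* algebras (built from variables, →, ¬, 1) is called regular if it contains → or 1; the non-regular terms are exactly ¬ⁿp with p a variable and n ≥ 0. *)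

theory Defs
  imports Main
begin

datatype trm = Var nat | Imp trm trm | Neg trm | One

fun regular :: "trm \<Rightarrow> bool" where
  "regular (Var p) = False"
| "regular (Imp s t) = True"
| "regular (Neg t) = regular t"
| "regular One = True"

record 'a wstar_alg =
  carrier :: "'a set"
  imp :: "'a \<Rightarrow> 'a \<Rightarrow> 'a"
  neg :: "'a \<Rightarrow> 'a"
  one :: "'a"

record 'a qw_alg = "'a wstar_alg" +
  pls :: "'a \<Rightarrow> 'a"
  mns :: "'a \<Rightarrow> 'a"

text \<open>Axioms shared by quasi-Wajsberg* and Wajsberg* algebras, parametrised by
  the operations; in the Wajsberg* case plus and minus are the defined ones.\<close>
definition common_axioms ::
  "'a set \<Rightarrow> ('a \<Rightarrow> 'a \<Rightarrow> 'a) \<Rightarrow> ('a \<Rightarrow> 'a) \<Rightarrow> ('a \<Rightarrow> 'a) \<Rightarrow> ('a \<Rightarrow> 'a) \<Rightarrow> 'a \<Rightarrow> bool" where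
  "common_axioms C im ng pl mn o1 \<longleftrightarrow>
     (let J = (\<lambda>x y. im (im (pl (im (pl x) (pl y))) (mn (ng x)))
                        (im (mn (im (mn y) (mn x))) (mn x)))
      in
     o1 \<in> C \<and>
     (\<forall>x\<in>C. \<forall>y\<in>C. im x y \<in> C) \<and>
     (\<forall>x\<in>C. ng x \<in> C) \<and> (\<forall>x\<in>C. pl x \<in> C) \<and> (\<forall>x\<in>C. mn x \<in> C) \<and>
     (\<forall>x\<in>C. \<forall>y\<in>C. im x y = im (ng y) (ng x)) \<and>
     (\<forall>x\<in>C. \<forall>y\<in>C. \<forall>z\<in>C.
        im (im x o1) (im (im y o1) z) = im (im y o1) (im (im x o1) z)) \<and>
     (\<forall>x\<in>C. im (im o1 x) o1 = o1) \<and>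
     (\<forall>x\<in>C. im (im o1 o1) (pl x) = pl (im (im o1 o1) x) \<and>
              pl (im (im o1 o1) x) = im (im x o1) o1) \<and>
     (\<forall>x\<in>C. im (im o1 o1) (mn x) = mn (im (im o1 o1) x) \<and>
              mn (im (im o1 o1) x) = im (im x (ng o1)) (ng o1)) \<and>
     (\<forall>x\<in>C. \<forall>y\<in>C. im x y = im (im (pl y) (mn x)) (im (pl x) (mn y))) \<and>
     (\<forall>x\<in>C. \<forall>y\<in>C. ng (im x y) = im y x) \<and>
     (\<forall>x\<in>C. ng (ng x) = x) \<and>
     (\<forall>x\<in>C. \<forall>y\<in>C. pl (im x (im (ng x) y)) = im (pl x) (im (ng (pl x)) (pl y))) \<and>
     (\<forall>x\<in>C. \<forall>y\<in>C. J x y = J y x) \<and>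
     (\<forall>x\<in>C. \<forall>y\<in>C. \<forall>z\<in>C. J x (J y z) = J (J x y) z) \<and>
     (\<forall>x\<in>C. \<forall>y\<in>C. \<forall>z\<in>C. im x (J y z) = J (im x y) (im x z)))"

definition quasi_wajsberg_star :: "'a qw_alg \<Rightarrow> bool" where
  "quasi_wajsberg_star A \<longleftrightarrow>
     common_axioms (carrier A) (imp A) (neg A) (pls A) (mns A) (one A) \<and>
     (\<forall>x\<in>carrier A. \<forall>y\<in>carrier A. \<forall>z\<in>carrier A.
        imp A (imp A z z) (imp A x y) = imp A x y)"

definition strong_quasi_wajsberg_star :: "'a qw_alg \<Rightarrow> bool" where
  "strong_quasi_wajsberg_star A \<longleftrightarrow>
     quasi_wajsberg_star A \<and>
     (\<forall>x\<in>carrier A. pls A x = imp A (imp A (one A) (one A)) (pls A x) \<and>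
                     mns A x = imp A (imp A (one A) (one A)) (mns A x))"

definition wajsberg_star :: "'a wstar_alg \<Rightarrow> bool" where
  "wajsberg_star M \<longleftrightarrow>
     common_axioms (carrier M) (imp M) (neg M)
       (\<lambda>x. imp M (imp M x (one M)) (one M))
       (\<lambda>x. imp M (imp M x (neg M (one M))) (neg M (one M))) (one M) \<and>
     (\<forall>x\<in>carrier M. \<forall>y\<in>carrier M. imp M (imp M y y) x = x)"

fun eval :: "('a, 'b) wstar_alg_scheme \<Rightarrow> (nat \<Rightarrow> 'a) \<Rightarrow> trm \<Rightarrow> 'a" where
  "eval A v (Var p) = v p"
| "eval A v (Imp s t) = imp A (eval A v s) (eval A v t)"
| "eval A v (Neg t) = neg A (eval A v t)"
| "eval A v One = one A"

definition holds_in :: "('a, 'b) wstar_alg_scheme \<Rightarrow> trm \<Rightarrow> trm \<Rightarrow> bool" where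
  "holds_in A s t \<longleftrightarrow> (\<forall>v. (\<forall>p. v p \<in> carrier A) \<longrightarrow> eval A v s = eval A v t)"

end

theory Submission
  imports Defs
begin

lemma eval_cong_ops:
  assumes "imp A = imp B" "neg A = neg B" "one A = one B"
  shows "eval A v t = eval B v t"
  using assms by (induction t) auto

lemma sq_facts:
  assumes S: "strong_quasi_wajsberg_star A"
  defines "C \<equiv> carrier A" and "im \<equiv> imp A" and "ng \<equiv> neg A" and "o1 \<equiv> one A"
  shows "o1 \<in> C" and "\<And>x y. x \<in> C \<Longrightarrow> y \<in> C \<Longrightarrow> im x y \<in> C"
    and "\<And>x. x \<in> C \<Longrightarrow> ng x \<in> C"
    and "\<And>x. x \<in> C \<Longrightarrow> pls A x = im (im x o1) o1"
    and "\<And>x. x \<in> C \<Longrightarrow> mns A x = im (im x (ng o1)) (ng o1)"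
    and "\<And>x y. x \<in> C \<Longrightarrow> y \<in> C \<Longrightarrow> im (im o1 o1) (im x y) = im x y"
    and "\<And>x y. x \<in> C \<Longrightarrow> y \<in> C \<Longrightarrow> im (im (im o1 o1) x) (im (im o1 o1) y) = im x y"
    and "\<And>x. x \<in> C \<Longrightarrow> im (im o1 o1) (ng x) = ng (im (im o1 o1) x)"
    and "im (im o1 o1) o1 = o1"
    and "\<And>x y z. x \<in> C \<Longrightarrow> y \<in> C \<Longrightarrow> z \<in> C \<Longrightarrow> im (im z z) (im x y) = im x y"
proof -
  have Q: "quasi_wajsberg_star A" and st: "\<forall>x\<in>C. pls A x = im (im o1 o1) (pls A x) \<and>
                     mns A x = im (im o1 o1) (mns A x)"
    using S unfolding strong_quasi_wajsberg_star_def C_def im_def o1_def by auto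
  have CA: "common_axioms C im ng (pls A) (mns A) o1"
    and Z: "\<forall>x\<in>C. \<forall>y\<in>C. \<forall>z\<in>C. im (im z z) (im x y) = im x y"
    using Q unfolding quasi_wajsberg_star_def C_def im_def ng_def o1_def by auto
  note ax = CA[unfolded common_axioms_def Let_def]
  note o1C0 = ax[THEN conjunct1]
  note imC0 = ax[THEN conjunct2, THEN conjunct1]
  note ngC0 = ax[THEN conjunct2, THEN conjunct2, THEN conjunct1]
  note plC0 = ax[THEN conjunct2, THEN conjunct2, THEN conjunct2, THEN conjunct1]
  note mnC0 = ax[THEN conjunct2, THEN conjunct2, THEN conjunct2, THEN conjunct2, THEN conjunct1]
  note contra0 = ax[THEN conjunct2, THEN conjunct2, THEN conjunct2, THEN conjunct2, THEN conjunct2, THEN conjunct1]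
  note perm0 = ax[THEN conjunct2, THEN conjunct2, THEN conjunct2, THEN conjunct2, THEN conjunct2, THEN conjunct2, THEN conjunct1]
  note oneax0 = ax[THEN conjunct2, THEN conjunct2, THEN conjunct2, THEN conjunct2, THEN conjunct2, THEN conjunct2, THEN conjunct2, THEN conjunct1]
  note plax0 = ax[THEN conjunct2, THEN conjunct2, THEN conjunct2, THEN conjunct2, THEN conjunct2, THEN conjunct2, THEN conjunct2, THEN conjunct2, THEN conjunct1]
  note mnax0 = ax[THEN conjunct2, THEN conjunct2, THEN conjunct2, THEN conjunct2, THEN conjunct2, THEN conjunct2, THEN conjunct2, THEN conjunct2, THEN conjunct2, THEN conjunct1]
  note dec0 = ax[THEN conjunct2, THEN conjunct2, THEN conjunct2, THEN conjunct2, THEN conjunct2, THEN conjunct2, THEN conjunct2, THEN conjunct2, THEN conjunct2, THEN conjunct2, THEN conjunct1]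
  note ngim0 = ax[THEN conjunct2, THEN conjunct2, THEN conjunct2, THEN conjunct2, THEN conjunct2, THEN conjunct2, THEN conjunct2, THEN conjunct2, THEN conjunct2, THEN conjunct2, THEN conjunct2, THEN conjunct1]
  note nn0 = ax[THEN conjunct2, THEN conjunct2, THEN conjunct2, THEN conjunct2, THEN conjunct2, THEN conjunct2, THEN conjunct2, THEN conjunct2, THEN conjunct2, THEN conjunct2, THEN conjunct2, THEN conjunct2, THEN conjunct1]
  note plimp0 = ax[THEN conjunct2, THEN conjunct2, THEN conjunct2, THEN conjunct2, THEN conjunct2, THEN conjunct2, THEN conjunct2, THEN conjunct2, THEN conjunct2, THEN conjunct2, THEN conjunct2, THEN conjunct2, THEN conjunct2, THEN conjunct1]
  note Jc0 = ax[THEN conjunct2, THEN conjunct2, THEN conjunct2, THEN conjunct2, THEN conjunct2, THEN conjunct2, THEN conjunct2, THEN conjunct2, THEN conjunct2, THEN conjunct2, THEN conjunct2, THEN conjunct2, THEN conjunct2, THEN conjunct2, THEN conjunct1]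
  note Ja0 = ax[THEN conjunct2, THEN conjunct2, THEN conjunct2, THEN conjunct2, THEN conjunct2, THEN conjunct2, THEN conjunct2, THEN conjunct2, THEN conjunct2, THEN conjunct2, THEN conjunct2, THEN conjunct2, THEN conjunct2, THEN conjunct2, THEN conjunct2, THEN conjunct1]
  note Jd0 = ax[THEN conjunct2, THEN conjunct2, THEN conjunct2, THEN conjunct2, THEN conjunct2, THEN conjunct2, THEN conjunct2, THEN conjunct2, THEN conjunct2, THEN conjunct2, THEN conjunct2, THEN conjunct2, THEN conjunct2, THEN conjunct2, THEN conjunct2, THEN conjunct2]
  show o1C: "o1 \<in> C" by (rule o1C0)
  show imC: "\<And>x y. x \<in> C \<Longrightarrow> y \<in> C \<Longrightarrow> im x y \<in> C" using imC0 by blast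
  show ngC: "\<And>x. x \<in> C \<Longrightarrow> ng x \<in> C" using ngC0 by blast
  show pl: "\<And>x. x \<in> C \<Longrightarrow> pls A x = im (im x o1) o1"
  proof -
    fix x assume x: "x \<in> C"
    have "im (im o1 o1) (pls A x) = pls A (im (im o1 o1) x) \<and>
              pls A (im (im o1 o1) x) = im (im x o1) o1" using plax0 x by blast
    then show "pls A x = im (im x o1) o1" using st x by metis
  qed
  show mn: "\<And>x. x \<in> C \<Longrightarrow> mns A x = im (im x (ng o1)) (ng o1)"
  proof -
    fix x assume x: "x \<in> C"
    have "im (im o1 o1) (mns A x) = mns A (im (im o1 o1) x) \<and>
              mns A (im (im o1 o1) x) = im (im x (ng o1)) (ng o1)" using mnax0 x by blast
    then show "mns A x = im (im x (ng o1)) (ng o1)" using st x by metis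
  qed
  show ee: "\<And>x y. x \<in> C \<Longrightarrow> y \<in> C \<Longrightarrow> im (im o1 o1) (im x y) = im x y"
    using Z o1C by blast
  have pl2: "\<And>x. x \<in> C \<Longrightarrow> pls A (im (im o1 o1) x) = pls A x"
    using plax0 pl o1C imC by metis
  have mn2: "\<And>x. x \<in> C \<Longrightarrow> mns A (im (im o1 o1) x) = mns A x"
    using mnax0 mn o1C imC by metis
  have dec: "\<forall>x\<in>C. \<forall>y\<in>C. im x y = im (im (pls A y) (mns A x)) (im (pls A x) (mns A y))"
    by (rule dec0)
  show "\<And>x y. x \<in> C \<Longrightarrow> y \<in> C \<Longrightarrow> im (im (im o1 o1) x) (im (im o1 o1) y) = im x y"
  proof -
    fix x y assume x: "x \<in> C" and y: "y \<in> C"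
    have ex: "im (im o1 o1) x \<in> C" "im (im o1 o1) y \<in> C" using imC o1C x y by auto
    show "im (im (im o1 o1) x) (im (im o1 o1) y) = im x y"
      using dec[rule_format, OF ex] dec[rule_format, OF x y] pl2[OF x] pl2[OF y] mn2[OF x] mn2[OF y]
      by simp
  qed
  have ngim: "\<forall>x\<in>C. \<forall>y\<in>C. ng (im x y) = im y x" by (rule ngim0)
  have contra: "\<forall>x\<in>C. \<forall>y\<in>C. im x y = im (ng y) (ng x)" by (rule contra0)
  have nge: "ng (im o1 o1) = im o1 o1" using ngim o1C by blast
  have nn: "\<forall>x\<in>C. ng (ng x) = x" by (rule nn0)
  show "\<And>x. x \<in> C \<Longrightarrow> im (im o1 o1) (ng x) = ng (im (im o1 o1) x)"
  proof -
    fix x assume x: "x \<in> C"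
    have e: "im o1 o1 \<in> C" using imC o1C by auto
    have "ng (im (im o1 o1) x) = im x (im o1 o1)" using ngim e x by blast
    also have "\<dots> = im (ng (im o1 o1)) (ng x)" using contra e x by blast
    finally show "im (im o1 o1) (ng x) = ng (im (im o1 o1) x)" using nge by simp
  qed
  show "im (im o1 o1) o1 = o1" using oneax0 o1C by blast
  show "\<And>x y z. x \<in> C \<Longrightarrow> y \<in> C \<Longrightarrow> z \<in> C \<Longrightarrow> im (im z z) (im x y) = im x y"
    using Z by blast
qed

lemma ca_restrict:
  assumes ca: "common_axioms C im ng pl mn o1" and RC: "R \<subseteq> C" and o: "o1 \<in> R"
   and ci: "\<And>x y. x \<in> R \<Longrightarrow> y \<in> R \<Longrightarrow> im x y \<in> R"
   and cn: "\<And>x. x \<in> R \<Longrightarrow> ng x \<in> R"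
   and cp: "\<And>x. x \<in> R \<Longrightarrow> pl' x \<in> R"
   and cm: "\<And>x. x \<in> R \<Longrightarrow> mn' x \<in> R"
   and ep: "\<And>x. x \<in> C \<Longrightarrow> pl x = pl' x"
   and em: "\<And>x. x \<in> C \<Longrightarrow> mn x = mn' x"
  shows "common_axioms R im ng pl' mn' o1"
proof -
  have ep': "\<And>x. x \<in> R \<Longrightarrow> pl x = pl' x" and em': "\<And>x. x \<in> R \<Longrightarrow> mn x = mn' x"
    using ep em RC by auto
  have sub: "\<And>x. x \<in> R \<Longrightarrow> x \<in> C" using RC by auto
  note ax = ca[unfolded common_axioms_def Let_def]
  note o1C0 = ax[THEN conjunct1]
  note imC0 = ax[THEN conjunct2, THEN conjunct1]
  note ngC0 = ax[THEN conjunct2, THEN conjunct2, THEN conjunct1]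
  note plC0 = ax[THEN conjunct2, THEN conjunct2, THEN conjunct2, THEN conjunct1]
  note mnC0 = ax[THEN conjunct2, THEN conjunct2, THEN conjunct2, THEN conjunct2, THEN conjunct1]
  note contra0 = ax[THEN conjunct2, THEN conjunct2, THEN conjunct2, THEN conjunct2, THEN conjunct2, THEN conjunct1]
  note perm0 = ax[THEN conjunct2, THEN conjunct2, THEN conjunct2, THEN conjunct2, THEN conjunct2, THEN conjunct2, THEN conjunct1]
  note oneax0 = ax[THEN conjunct2, THEN conjunct2, THEN conjunct2, THEN conjunct2, THEN conjunct2, THEN conjunct2, THEN conjunct2, THEN conjunct1]
  note plax0 = ax[THEN conjunct2, THEN conjunct2, THEN conjunct2, THEN conjunct2, THEN conjunct2, THEN conjunct2, THEN conjunct2, THEN conjunct2, THEN conjunct1]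
  note mnax0 = ax[THEN conjunct2, THEN conjunct2, THEN conjunct2, THEN conjunct2, THEN conjunct2, THEN conjunct2, THEN conjunct2, THEN conjunct2, THEN conjunct2, THEN conjunct1]
  note dec0 = ax[THEN conjunct2, THEN conjunct2, THEN conjunct2, THEN conjunct2, THEN conjunct2, THEN conjunct2, THEN conjunct2, THEN conjunct2, THEN conjunct2, THEN conjunct2, THEN conjunct1]
  note ngim0 = ax[THEN conjunct2, THEN conjunct2, THEN conjunct2, THEN conjunct2, THEN conjunct2, THEN conjunct2, THEN conjunct2, THEN conjunct2, THEN conjunct2, THEN conjunct2, THEN conjunct2, THEN conjunct1]
  note nn0 = ax[THEN conjunct2, THEN conjunct2, THEN conjunct2, THEN conjunct2, THEN conjunct2, THEN conjunct2, THEN conjunct2, THEN conjunct2, THEN conjunct2, THEN conjunct2, THEN conjunct2, THEN conjunct2, THEN conjunct1]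
  note plimp0 = ax[THEN conjunct2, THEN conjunct2, THEN conjunct2, THEN conjunct2, THEN conjunct2, THEN conjunct2, THEN conjunct2, THEN conjunct2, THEN conjunct2, THEN conjunct2, THEN conjunct2, THEN conjunct2, THEN conjunct2, THEN conjunct1]
  note Jc0 = ax[THEN conjunct2, THEN conjunct2, THEN conjunct2, THEN conjunct2, THEN conjunct2, THEN conjunct2, THEN conjunct2, THEN conjunct2, THEN conjunct2, THEN conjunct2, THEN conjunct2, THEN conjunct2, THEN conjunct2, THEN conjunct2, THEN conjunct1]
  note Ja0 = ax[THEN conjunct2, THEN conjunct2, THEN conjunct2, THEN conjunct2, THEN conjunct2, THEN conjunct2, THEN conjunct2, THEN conjunct2, THEN conjunct2, THEN conjunct2, THEN conjunct2, THEN conjunct2, THEN conjunct2, THEN conjunct2, THEN conjunct2, THEN conjunct1]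
  note Jd0 = ax[THEN conjunct2, THEN conjunct2, THEN conjunct2, THEN conjunct2, THEN conjunct2, THEN conjunct2, THEN conjunct2, THEN conjunct2, THEN conjunct2, THEN conjunct2, THEN conjunct2, THEN conjunct2, THEN conjunct2, THEN conjunct2, THEN conjunct2, THEN conjunct2]
  note simps = ep' em' ci cn cp cm o
  show ?thesis unfolding common_axioms_def Let_def
  proof (intro conjI ballI)
    show "o1 \<in> R" by (rule o)
    show "\<And>x y. x \<in> R \<Longrightarrow> y \<in> R \<Longrightarrow> im x y \<in> R" by (rule ci)
    show "\<And>x. x \<in> R \<Longrightarrow> ng x \<in> R" by (rule cn)
    show "\<And>x. x \<in> R \<Longrightarrow> pl' x \<in> R" by (rule cp)
    show "\<And>x. x \<in> R \<Longrightarrow> mn' x \<in> R" by (rule cm)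
    show "\<And>x y. x \<in> R \<Longrightarrow> y \<in> R \<Longrightarrow> im x y = im (ng y) (ng x)" using contra0 sub by blast
    show "\<And>x y z. x \<in> R \<Longrightarrow> y \<in> R \<Longrightarrow> z \<in> R \<Longrightarrow> im (im x o1) (im (im y o1) z) = im (im y o1) (im (im x o1) z)" using perm0 sub by blast
    show "\<And>x. x \<in> R \<Longrightarrow> im (im o1 x) o1 = o1" using oneax0 sub by blast
    show "\<And>x. x \<in> R \<Longrightarrow> im (im o1 o1) (pl' x) = pl' (im (im o1 o1) x)"
      subgoal for x using plax0[rule_format, OF sub, of x] by (simp add: simps)
      done
    show "\<And>x. x \<in> R \<Longrightarrow> pl' (im (im o1 o1) x) = im (im x o1) o1"
      subgoal for x using plax0[rule_format, OF sub, of x] by (simp add: simps)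
      done
    show "\<And>x. x \<in> R \<Longrightarrow> im (im o1 o1) (mn' x) = mn' (im (im o1 o1) x)"
      subgoal for x using mnax0[rule_format, OF sub, of x] by (simp add: simps)
      done
    show "\<And>x. x \<in> R \<Longrightarrow> mn' (im (im o1 o1) x) = im (im x (ng o1)) (ng o1)"
      subgoal for x using mnax0[rule_format, OF sub, of x] by (simp add: simps)
      done
    show "\<And>x y. x \<in> R \<Longrightarrow> y \<in> R \<Longrightarrow> im x y = im (im (pl' y) (mn' x)) (im (pl' x) (mn' y))"
      subgoal for x y using dec0[rule_format, OF sub sub, of x y] by (simp add: simps)
      done
    show "\<And>x y. x \<in> R \<Longrightarrow> y \<in> R \<Longrightarrow> ng (im x y) = im y x" using ngim0 sub by blast
    show "\<And>x. x \<in> R \<Longrightarrow> ng (ng x) = x" using nn0 sub by blast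
    show "\<And>x y. x \<in> R \<Longrightarrow> y \<in> R \<Longrightarrow> pl' (im x (im (ng x) y)) = im (pl' x) (im (ng (pl' x)) (pl' y))"
      subgoal for x y using plimp0[rule_format, OF sub sub, of x y] by (simp add: simps)
      done
    let ?J = "\<lambda>x y. im (im (pl' (im (pl' x) (pl' y))) (mn' (ng x))) (im (mn' (im (mn' y) (mn' x))) (mn' x))"
    show "\<And>x y. x \<in> R \<Longrightarrow> y \<in> R \<Longrightarrow> ?J x y = ?J y x"
      subgoal for x y using Jc0[rule_format, OF sub sub, of x y] by (simp add: simps)
      done
    show "\<And>x y z. x \<in> R \<Longrightarrow> y \<in> R \<Longrightarrow> z \<in> R \<Longrightarrow> ?J x (?J y z) = ?J (?J x y) z"
      subgoal for x y z using Ja0[rule_format, OF sub sub sub, of x y z] by (simp add: simps)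
      done
    show "\<And>x y z. x \<in> R \<Longrightarrow> y \<in> R \<Longrightarrow> z \<in> R \<Longrightarrow> im x (?J y z) = ?J (im x y) (im x z)"
      subgoal for x y z using Jd0[rule_format, OF sub sub sub, of x y z] by (simp add: simps)
      done
  qed
qed

theorem proposition3p7:
  fixes t1 t2 :: trm
  assumes "regular t1" and "regular t2"
  shows "(\<forall>A :: 'a qw_alg. strong_quasi_wajsberg_star A \<longrightarrow> holds_in A t1 t2) \<longleftrightarrow>
         (\<forall>M :: 'a wstar_alg. wajsberg_star M \<longrightarrow> holds_in M t1 t2)"
  (is "?L \<longleftrightarrow> ?R")
proof
  assume L: ?L
  show ?R
  proof (intro allI impI)
    fix M :: "'a wstar_alg"
    assume W: "wajsberg_star M"
    define A where "A = \<lparr>carrier = carrier M, imp = imp M, neg = neg M, one = one M,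
       pls = (\<lambda>x. imp M (imp M x (one M)) (one M)),
       mns = (\<lambda>x. imp M (imp M x (neg M (one M))) (neg M (one M)))\<rparr>"
    have CA: "common_axioms (carrier M) (imp M) (neg M)
       (\<lambda>x. imp M (imp M x (one M)) (one M))
       (\<lambda>x. imp M (imp M x (neg M (one M))) (neg M (one M))) (one M)"
      and W2: "\<forall>x\<in>carrier M. \<forall>y\<in>carrier M. imp M (imp M y y) x = x"
      using W unfolding wajsberg_star_def by auto
    note ax = CA[unfolded common_axioms_def Let_def]
    note o1C0 = ax[THEN conjunct1]
    note imC0 = ax[THEN conjunct2, THEN conjunct1]
    note plC0 = ax[THEN conjunct2, THEN conjunct2, THEN conjunct2, THEN conjunct1]
    note mnC0 = ax[THEN conjunct2, THEN conjunct2, THEN conjunct2, THEN conjunct2, THEN conjunct1]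
    have "strong_quasi_wajsberg_star A"
      unfolding strong_quasi_wajsberg_star_def quasi_wajsberg_star_def
    proof (intro conjI ballI)
      show "common_axioms (carrier A) (imp A) (neg A) (pls A) (mns A) (one A)"
        using CA by (simp add: A_def)
      fix x y z assume "x \<in> carrier A" "y \<in> carrier A" "z \<in> carrier A"
      then show "imp A (imp A z z) (imp A x y) = imp A x y"
        using W2 imC0 by (simp add: A_def)
    next
      fix x assume x: "x \<in> carrier A"
      show "pls A x = imp A (imp A (one A) (one A)) (pls A x)"
        using W2 plC0 o1C0 x by (simp add: A_def)
      show "mns A x = imp A (imp A (one A) (one A)) (mns A x)"
        using W2 mnC0 o1C0 x by (simp add: A_def)
    qed
    then have "holds_in A t1 t2" using L by blast
    moreover have "\<And>v t. eval A v t = eval M v t"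
      by (rule eval_cong_ops) (simp_all add: A_def)
    moreover have "carrier A = carrier M" by (simp add: A_def)
    ultimately show "holds_in M t1 t2" unfolding holds_in_def by simp
  qed
next
  assume R: ?R
  show ?L
  proof (intro allI impI)
    fix A :: "'a qw_alg"
    assume S: "strong_quasi_wajsberg_star A"
    define C where "C = carrier A"
    define im where "im = imp A"
    define ng where "ng = neg A"
    define o1 where "o1 = one A"
    define f where "f = (\<lambda>x. im (im o1 o1) x)"
    note F = sq_facts[OF S, folded C_def im_def ng_def o1_def]
    have o1C: "o1 \<in> C" and imC: "\<And>x y. x \<in> C \<Longrightarrow> y \<in> C \<Longrightarrow> im x y \<in> C"
      and ngC: "\<And>x. x \<in> C \<Longrightarrow> ng x \<in> C"
      and pl: "\<And>x. x \<in> C \<Longrightarrow> pls A x = im (im x o1) o1"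
      and mn: "\<And>x. x \<in> C \<Longrightarrow> mns A x = im (im x (ng o1)) (ng o1)"
      and ee: "\<And>x y. x \<in> C \<Longrightarrow> y \<in> C \<Longrightarrow> f (im x y) = im x y"
      and ff: "\<And>x y. x \<in> C \<Longrightarrow> y \<in> C \<Longrightarrow> im (f x) (f y) = im x y"
      and fn: "\<And>x. x \<in> C \<Longrightarrow> f (ng x) = ng (f x)"
      and f1: "f o1 = o1"
      and Z: "\<And>x y z. x \<in> C \<Longrightarrow> y \<in> C \<Longrightarrow> z \<in> C \<Longrightarrow> im (im z z) (im x y) = im x y"
      using F unfolding f_def by auto
    have fC: "\<And>x. x \<in> C \<Longrightarrow> f x \<in> C" unfolding f_def using imC o1C by auto
    define Rs where "Rs = f ` C"
    define M where "M = \<lparr>carrier = Rs, imp = im, neg = ng, one = o1\<rparr>"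
    have RC: "Rs \<subseteq> C" unfolding Rs_def using fC by auto
    have oR: "o1 \<in> Rs" unfolding Rs_def using f1 o1C by (metis image_eqI)
    have ciR: "\<And>x y. x \<in> C \<Longrightarrow> y \<in> C \<Longrightarrow> im x y \<in> Rs"
      unfolding Rs_def using ee imC by (metis image_eqI)
    have ci: "\<And>x y. x \<in> Rs \<Longrightarrow> y \<in> Rs \<Longrightarrow> im x y \<in> Rs" using ciR RC by auto
    have cn: "\<And>x. x \<in> Rs \<Longrightarrow> ng x \<in> Rs"
    proof -
      fix x assume "x \<in> Rs"
      then obtain a where a: "a \<in> C" "x = f a" unfolding Rs_def by auto
      then have "ng x = f (ng a)" using fn by simp
      then show "ng x \<in> Rs" unfolding Rs_def using ngC a by auto
    qed
    have ngo: "ng o1 \<in> Rs" using cn oR by auto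
    have cp: "\<And>x. x \<in> Rs \<Longrightarrow> im (im x o1) o1 \<in> Rs" using ci oR by auto
    have cm: "\<And>x. x \<in> Rs \<Longrightarrow> im (im x (ng o1)) (ng o1) \<in> Rs" using ci ngo by auto
    have "common_axioms C im ng (pls A) (mns A) o1"
      using S unfolding strong_quasi_wajsberg_star_def quasi_wajsberg_star_def C_def im_def ng_def o1_def
      by auto
    then have CAR: "common_axioms Rs im ng (\<lambda>x. im (im x o1) o1) (\<lambda>x. im (im x (ng o1)) (ng o1)) o1"
      by (rule ca_restrict[OF _ RC oR ci cn cp cm pl mn])
    have W2: "\<forall>x\<in>Rs. \<forall>y\<in>Rs. im (im y y) x = x"
    proof (intro ballI)
      fix x y assume x: "x \<in> Rs" and y: "y \<in> Rs"
      then obtain a where a: "a \<in> C" "x = f a" unfolding Rs_def by auto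
      show "im (im y y) x = x" using Z[of "im o1 o1" a y] a y RC o1C imC unfolding f_def by auto
    qed
    have WM: "wajsberg_star M" unfolding wajsberg_star_def M_def using CAR W2 by simp
    have hM: "holds_in M t1 t2" using R WM by blast
    have evC: "\<And>v t. (\<forall>p. (v::nat \<Rightarrow> 'a) p \<in> C) \<Longrightarrow> eval A v t \<in> C"
    proof -
      fix v :: "nat \<Rightarrow> 'a" and t assume "\<forall>p. v p \<in> C"
      then show "eval A v t \<in> C"
        by (induction t) (auto simp: imC[unfolded im_def] ngC[unfolded ng_def] o1C[unfolded o1_def] im_def ng_def o1_def)
    qed
    have hom: "\<And>v t. (\<forall>p. (v::nat \<Rightarrow> 'a) p \<in> C) \<Longrightarrow> eval A (f \<circ> v) t = f (eval A v t)"
    proof -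
      fix v :: "nat \<Rightarrow> 'a" and t assume vC: "\<forall>p. v p \<in> C"
      show "eval A (f \<circ> v) t = f (eval A v t)"
      proof (induction t)
        case (Imp s t)
        then show ?case using ff ee evC[OF vC] by (simp add: im_def)
      next
        case (Neg t)
        then show ?case using fn evC[OF vC] by (simp add: ng_def)
      next
        case One
        then show ?case using f1 by (simp add: o1_def)
      qed simp
    qed
    have reg: "\<And>v t. (\<forall>p. (v::nat \<Rightarrow> 'a) p \<in> C) \<Longrightarrow> regular t \<Longrightarrow> f (eval A v t) = eval A v t"
    proof -
      fix v :: "nat \<Rightarrow> 'a" and t assume vC: "\<forall>p. v p \<in> C"
      show "regular t \<Longrightarrow> f (eval A v t) = eval A v t"
      proof (induction t)
        case (Imp s t)
        then show ?case using ee evC[OF vC] by (simp add: im_def)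
      next
        case (Neg t)
        then show ?case using fn evC[OF vC] by (simp add: ng_def)
      next
        case One
        then show ?case using f1 by (simp add: o1_def)
      qed simp
    qed
    have evM: "\<And>v t. eval M v t = eval A v t"
      by (rule eval_cong_ops) (simp_all add: M_def im_def ng_def o1_def)
    show "holds_in A t1 t2" unfolding holds_in_def
    proof (intro allI impI)
      fix v :: "nat \<Rightarrow> 'a" assume vC': "\<forall>p. v p \<in> carrier A"
      then have vC: "\<forall>p. v p \<in> C" by (simp add: C_def)
      have "\<forall>p. (f \<circ> v) p \<in> carrier M" using vC by (simp add: M_def Rs_def)
      then have "eval M (f \<circ> v) t1 = eval M (f \<circ> v) t2" using hM unfolding holds_in_def by blast
      then have "f (eval A v t1) = f (eval A v t2)" using evM hom[OF vC] by simp
      then show "eval A v t1 = eval A v t2" using reg[OF vC] assms by simp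
    qed
  qed
qed

end
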